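(* Let $R$ be a division ring with center $C$, let $\{I_{a,b}\}_{a,b\in\mathbb{Z}_{\ge0}}\subseteq R$, and let $\{p_k(x)\}_{k\ge0}\subseteq R[x]$, $\{q_k(y)\}_{k\ge0}\subseteq R[y]$ be biorthonormal with respect to $\{I_{a,b}\}$, with $p_k$ and $q_k$ of degree exactly $k$. Suppose there are polynomials $f(x)=\sum_{i=0}^n a_i x^i$ and $g(y)=\sum_{j=0}^m y^j b_j$ with $a_i,b_j\in C$, and elements $\alpha_r,\beta_s\in R$, such that $$\sum_{i=0}^n a_i I_{r+i,s}+\sum_{j=0}^m I_{r,s+j}b_j=\alpha_r\beta_s\quad\text{for all } r,s\ge 0.$$ Writing $p_k(x)=\sum_{i=0}^k c^{(k)}_i x^i$ and $q_k(y)=\sum_{i=0}^k y^i d^{(k)}_i$, set $\pi_k=\sum_{i=0}^k c^{(k)}_i\alpha_i$ and $\eta_k=\sum_{i=0}^k \beta_i d^{(k)}_i$, and assume all $\pi_k,\eta_k$ are nonzero. Then $p_k$ and $q_k$ satisfy $(n+m+2)$-term recurrence relations: for every $k\ge1$ there exist elements $A_{k,i},B_{k,i}\in R$ such that $$\big(\pi_k^{-1}p_k(x)-\pi_{k-1}^{-1}p_{k-1}(x)\big)f(x)=\sum_{i=k-1-m}^{k+n}A_{k,i}\,p_i(x),$$ $$g(y)\big(q_k(y)\eta_k^{-1}-q_{k-1}(y)\eta_{k-1}^{-1}\big)=\sum_{i=k-1-n}^{k+m}q_i(y)\,B_{k,i},$$ where terms with negative index are omitted.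
   Context: Elements of $R[x]$ are written $\sum_i a_i x^i$ and elements of $R[y]$ as $\sum_j y^j b_j$; $x$ and $y$ commute with elements of $C$. The pairing $\langle\cdot,\cdot\rangle:R[x]\times R[y]\to R$ determined by the bimoments is $\langle \sum_i a_i x^i,\sum_j y^j b_j\rangle=\sum_{i,j}a_iI_{i,j}b_j$. The sequences are biorthonormal if $\langle p_k,q_l\rangle=0$ for $k\neq l$ and $\langle p_k,q_k\rangle=1$ for all $k$. *)

theory Defs
  imports Main
begin

text \<open>Polynomials in one variable (x or y) commuting with the coefficients are represented
  by their coefficient sequences nat \<Rightarrow> 'a.  For p(x) = sum c_i x^i the coefficients are
  written on the left, for q(y) = sum y^i d_i on the right; in both cases the product
  of two such polynomials has coefficient sequence given by the convolution below.\<close>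

definition central :: "'a::ring \<Rightarrow> bool" where
  "central c \<longleftrightarrow> (\<forall>z. c * z = z * c)"

definition pmult :: "(nat \<Rightarrow> 'a::ring) \<Rightarrow> (nat \<Rightarrow> 'a) \<Rightarrow> nat \<Rightarrow> 'a" where
  "pmult u v t = (\<Sum>i\<le>t. u i * v (t - i))"

definition has_degree :: "(nat \<Rightarrow> 'a::zero) \<Rightarrow> nat \<Rightarrow> bool" where
  "has_degree u d \<longleftrightarrow> u d \<noteq> 0 \<and> (\<forall>i>d. u i = 0)"

definition bipair :: "(nat \<Rightarrow> nat \<Rightarrow> 'a::ring) \<Rightarrow> nat \<Rightarrow> (nat \<Rightarrow> 'a) \<Rightarrow> nat \<Rightarrow> (nat \<Rightarrow> 'a) \<Rightarrow> 'a" where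
  "bipair I dp u dq v = (\<Sum>i\<le>dp. \<Sum>j\<le>dq. u i * I i j * v j)"

end

theory Submission
  imports Defs
begin

lemma pmult_alt:
  fixes u v :: "nat \<Rightarrow> 'a::ring"
  assumes su: "\<forall>i>du. u i = 0" and sv: "\<forall>j>dv. v j = 0"
  shows "pmult u v t = (\<Sum>r\<le>du. \<Sum>j\<le>dv. if r + j = t then u r * v j else 0)"
proof -
  have "(\<Sum>r\<le>du. \<Sum>j\<le>dv. if r + j = t then u r * v j else 0)
      = (\<Sum>r\<le>du. if r \<le> t \<and> t - r \<le> dv then u r * v (t - r) else 0)"
  proof (rule sum.cong[OF refl])
    fix r assume "r \<in> {..du}"
    have "(\<Sum>j\<le>dv. if r + j = t then u r * v j else 0) = (\<Sum>j\<le>dv. if j = t - r \<and> r \<le> t then u r * v j else 0)"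
      by (rule sum.cong) auto
    also have "\<dots> = (if r \<le> t \<and> t - r \<le> dv then u r * v (t - r) else 0)"
      by (cases "r \<le> t") (auto simp: sum.delta)
    finally show "(\<Sum>j\<le>dv. if r + j = t then u r * v j else 0) = (if r \<le> t \<and> t - r \<le> dv then u r * v (t - r) else 0)" .
  qed
  also have "\<dots> = (\<Sum>r\<le>max du t. if r \<le> t \<and> t - r \<le> dv \<and> r \<le> du then u r * v (t - r) else 0)"
    by (rule sum.mono_neutral_cong_left) auto
  also have "\<dots> = (\<Sum>r\<le>t. u r * v (t - r))"
    by (rule sum.mono_neutral_cong_right) (use su sv in \<open>auto simp: not_le\<close>)
  finally show ?thesis unfolding pmult_def by simp
qed

lemma conv_sum_right:
  fixes X :: "nat \<Rightarrow> nat \<Rightarrow> 'a::ring"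
  assumes "du + dv \<le> M"
  shows "(\<Sum>t\<le>M. (\<Sum>r\<le>du. \<Sum>j\<le>dv. if r + j = t then X r j else 0) * Y t)
       = (\<Sum>r\<le>du. \<Sum>j\<le>dv. X r j * Y (r + j))"
proof -
  have "(\<Sum>t\<le>M. (\<Sum>r\<le>du. \<Sum>j\<le>dv. if r + j = t then X r j else 0) * Y t)
      = (\<Sum>t\<le>M. \<Sum>r\<le>du. \<Sum>j\<le>dv. if r + j = t then X r j * Y t else 0)"
    by (auto simp: sum_distrib_right intro!: sum.cong)
  also have "\<dots> = (\<Sum>r\<le>du. \<Sum>j\<le>dv. \<Sum>t\<le>M. if r + j = t then X r j * Y t else 0)"
    by (subst sum.swap) (simp add: sum.swap[of _ "{..M}"])
  also have "\<dots> = (\<Sum>r\<le>du. \<Sum>j\<le>dv. X r j * Y (r + j))"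
    using assms by (intro sum.cong refl) (auto simp: sum.delta)
  finally show ?thesis .
qed

lemma conv_sum_left:
  fixes X :: "nat \<Rightarrow> nat \<Rightarrow> 'a::ring"
  assumes "du + dv \<le> M"
  shows "(\<Sum>t\<le>M. Y t * (\<Sum>r\<le>du. \<Sum>j\<le>dv. if r + j = t then X r j else 0))
       = (\<Sum>r\<le>du. \<Sum>j\<le>dv. Y (r + j) * X r j)"
proof -
  have "(\<Sum>t\<le>M. Y t * (\<Sum>r\<le>du. \<Sum>j\<le>dv. if r + j = t then X r j else 0))
      = (\<Sum>t\<le>M. \<Sum>r\<le>du. \<Sum>j\<le>dv. if r + j = t then Y t * X r j else 0)"
    by (auto simp: sum_distrib_left intro!: sum.cong)
  also have "\<dots> = (\<Sum>r\<le>du. \<Sum>j\<le>dv. \<Sum>t\<le>M. if r + j = t then Y t * X r j else 0)"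
    by (subst sum.swap) (simp add: sum.swap[of _ "{..M}"])
  also have "\<dots> = (\<Sum>r\<le>du. \<Sum>j\<le>dv. Y (r + j) * X r j)"
    using assms by (intro sum.cong refl) (auto simp: sum.delta')
  finally show ?thesis .
qed

lemma bipair_ext_left:
  assumes "\<forall>t>d. u t = 0" "d \<le> D"
  shows "bipair I D u dq v = bipair I d u dq v"
  unfolding bipair_def
  by (rule sum.mono_neutral_right) (use assms in auto)

lemma bipair_ext_right:
  assumes "\<forall>t>d. v t = 0" "d \<le> D"
  shows "bipair I dp u D v = bipair I dp u d v"
  unfolding bipair_def
  by (intro sum.cong refl sum.mono_neutral_right) (use assms in auto)

lemma bipair_lin_left:
  "bipair I D (\<lambda>t. \<Sum>i\<in>S. c i * w i t) dq v = (\<Sum>i\<in>S. c i * bipair I D (w i) dq v)"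
  unfolding bipair_def
  by (simp add: sum_distrib_left sum_distrib_right mult.assoc sum.swap[of _ S])

lemma bipair_lin_right:
  "bipair I dp u D (\<lambda>t. \<Sum>i\<in>S. w i t * c i) = (\<Sum>i\<in>S. bipair I dp u D (w i) * c i)"
  unfolding bipair_def
  by (simp add: sum_distrib_left sum_distrib_right mult.assoc sum.swap[of _ S])

lemma bipair_diff_left:
  "bipair I D (\<lambda>t. c1 * f t - c2 * g t) dq v = c1 * bipair I D f dq v - c2 * bipair I D g dq v"
  unfolding bipair_def
  by (simp add: sum_distrib_left algebra_simps sum_subtractf)

lemma bipair_diff_right:
  "bipair I dp u D (\<lambda>t. f t * c1 - g t * c2) = bipair I dp u D f * c1 - bipair I dp u D g * c2"
  unfolding bipair_def
  by (simp add: sum_distrib_right algebra_simps sum_subtractf)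

lemma expand_left:
  fixes p :: "nat \<Rightarrow> nat \<Rightarrow> 'a::division_ring"
  assumes dp: "\<forall>k. has_degree (p k) k"
  shows "\<forall>t>N. v t = 0 \<Longrightarrow> \<exists>c. \<forall>t. v t = (\<Sum>i\<le>N. c i * p i t)"
proof (induction N arbitrary: v)
  case 0
  have p0: "p 0 0 \<noteq> 0" "\<forall>t>0. p 0 t = 0" using dp by (auto simp: has_degree_def)
  show ?case
  proof (intro exI allI)
    fix t show "v t = (\<Sum>i\<le>0. (\<lambda>_. v 0 * inverse (p 0 0)) i * p i t)"
      using 0 p0 by (cases t) (auto simp: mult.assoc)
  qed
next
  case (Suc N)
  define c0 where "c0 = v (Suc N) * inverse (p (Suc N) (Suc N))"
  define w where "w t = v t - c0 * p (Suc N) t" for t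
  have pS: "p (Suc N) (Suc N) \<noteq> 0" "\<forall>t>Suc N. p (Suc N) t = 0" using dp by (auto simp: has_degree_def)
  have "\<forall>t>N. w t = 0"
  proof (intro allI impI)
    fix t assume "t > N"
    then consider "t = Suc N" | "t > Suc N" by linarith
    then show "w t = 0"
      by cases (use Suc.prems pS in \<open>auto simp: w_def c0_def mult.assoc\<close>)
  qed
  then obtain c where c: "\<forall>t. w t = (\<Sum>i\<le>N. c i * p i t)" using Suc.IH by blast
  show ?case
  proof (intro exI allI)
    fix t
    have "(\<Sum>i\<le>N. (c(Suc N := c0)) i * p i t) = (\<Sum>i\<le>N. c i * p i t)"
      by (rule sum.cong) auto
    then have "(\<Sum>i\<le>Suc N. (c(Suc N := c0)) i * p i t) = (\<Sum>i\<le>N. c i * p i t) + c0 * p (Suc N) t"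
      by simp
    also have "\<dots> = v t" using c unfolding w_def by (metis diff_add_cancel)
    finally show "v t = (\<Sum>i\<le>Suc N. (c(Suc N := c0)) i * p i t)" by simp
  qed
qed

lemma expand_right:
  fixes q :: "nat \<Rightarrow> nat \<Rightarrow> 'a::division_ring"
  assumes dq: "\<forall>k. has_degree (q k) k"
  shows "\<forall>t>N. v t = 0 \<Longrightarrow> \<exists>c. \<forall>t. v t = (\<Sum>i\<le>N. q i t * c i)"
proof (induction N arbitrary: v)
  case 0
  have p0: "q 0 0 \<noteq> 0" "\<forall>t>0. q 0 t = 0" using dq by (auto simp: has_degree_def)
  show ?case
  proof (intro exI allI)
    fix t show "v t = (\<Sum>i\<le>0. q i t * (\<lambda>_. inverse (q 0 0) * v 0) i)"
      using 0 p0 by (cases t) (auto simp: mult.assoc[symmetric])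
  qed
next
  case (Suc N)
  define c0 where "c0 = inverse (q (Suc N) (Suc N)) * v (Suc N)"
  define w where "w t = v t - q (Suc N) t * c0" for t
  have pS: "q (Suc N) (Suc N) \<noteq> 0" "\<forall>t>Suc N. q (Suc N) t = 0" using dq by (auto simp: has_degree_def)
  have "\<forall>t>N. w t = 0"
  proof (intro allI impI)
    fix t assume "t > N"
    then consider "t = Suc N" | "t > Suc N" by linarith
    then show "w t = 0"
      by cases (use Suc.prems pS in \<open>auto simp: w_def c0_def mult.assoc[symmetric]\<close>)
  qed
  then obtain c where c: "\<forall>t. w t = (\<Sum>i\<le>N. q i t * c i)" using Suc.IH by blast
  show ?case
  proof (intro exI allI)
    fix t
    have "(\<Sum>i\<le>N. q i t * (c(Suc N := c0)) i) = (\<Sum>i\<le>N. q i t * c i)"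
      by (rule sum.cong) auto
    then have "(\<Sum>i\<le>Suc N. q i t * (c(Suc N := c0)) i) = (\<Sum>i\<le>N. q i t * c i) + q (Suc N) t * c0"
      by simp
    also have "\<dots> = v t" using c unfolding w_def by (metis diff_add_cancel)
    finally show "v t = (\<Sum>i\<le>Suc N. q i t * (c(Suc N := c0)) i)" by simp
  qed
qed

lemma coeff_left:
  fixes I :: "nat \<Rightarrow> nat \<Rightarrow> 'a::division_ring"
  assumes dp: "\<forall>k. has_degree (p k) k"
    and biorth: "\<forall>k l. bipair I k (p k) l (q l) = (if k = l then 1 else 0)"
    and v: "\<forall>t. v t = (\<Sum>i\<le>N. c i * p i t)" and l: "l \<le> N"
  shows "bipair I N v l (q l) = c l"
proof -
  have "v = (\<lambda>t. \<Sum>i\<le>N. c i * p i t)" using v by auto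
  then have "bipair I N v l (q l) = (\<Sum>i\<le>N. c i * bipair I N (p i) l (q l))"
    by (simp add: bipair_lin_left)
  also have "\<dots> = (\<Sum>i\<le>N. c i * bipair I i (p i) l (q l))"
  proof (intro sum.cong refl)
    fix i assume "i \<in> {..N}"
    then show "c i * bipair I N (p i) l (q l) = c i * bipair I i (p i) l (q l)"
      using dp by (subst bipair_ext_left[where d=i]) (auto simp: has_degree_def)
  qed
  also have "\<dots> = (\<Sum>i\<le>N. if i = l then c i else 0)"
    using biorth by (intro sum.cong refl) auto
  also have "\<dots> = c l" using l by (simp add: sum.delta)
  finally show ?thesis .
qed

lemma coeff_right:
  fixes I :: "nat \<Rightarrow> nat \<Rightarrow> 'a::division_ring"
  assumes dq: "\<forall>k. has_degree (q k) k"
    and biorth: "\<forall>k l. bipair I k (p k) l (q l) = (if k = l then 1 else 0)"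
    and v: "\<forall>t. v t = (\<Sum>i\<le>N. q i t * c i)" and l: "l \<le> N"
  shows "bipair I l (p l) N v = c l"
proof -
  have "v = (\<lambda>t. \<Sum>i\<le>N. q i t * c i)" using v by auto
  then have "bipair I l (p l) N v = (\<Sum>i\<le>N. bipair I l (p l) N (q i) * c i)"
    by (simp add: bipair_lin_right)
  also have "\<dots> = (\<Sum>i\<le>N. bipair I l (p l) i (q i) * c i)"
  proof (intro sum.cong refl)
    fix i assume "i \<in> {..N}"
    then show "bipair I l (p l) N (q i) * c i = bipair I l (p l) i (q i) * c i"
      using dq by (subst bipair_ext_right[where d=i]) (auto simp: has_degree_def)
  qed
  also have "\<dots> = (\<Sum>i\<le>N. if i = l then c i else 0)"
    using biorth by (intro sum.cong refl) auto
  also have "\<dots> = c l" using l by (simp add: sum.delta)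
  finally show ?thesis .
qed

lemma shift_sum_r:
  fixes f g :: "nat \<Rightarrow> 'a::ring"
  shows "(\<Sum>s\<le>l. f (s+j) * g s) = (\<Sum>s'\<le>l+j. f s' * (if j \<le> s' then g (s'-j) else 0))"
proof -
  have "(\<Sum>s'\<le>l+j. f s' * (if j \<le> s' then g (s'-j) else 0)) = (\<Sum>s'\<in>{j..l+j}. f s' * g (s'-j))"
  proof (rule sum.mono_neutral_cong_right)
    show "finite {..l+j}" by simp
    show "{j..l+j} \<subseteq> {..l+j}" by auto
    show "\<forall>i\<in>{..l+j} - {j..l+j}. f i * (if j \<le> i then g (i-j) else 0) = 0" by auto
    show "\<And>x. x \<in> {j..l+j} \<Longrightarrow> f x * (if j \<le> x then g (x-j) else 0) = f x * g (x-j)" by auto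
  qed
  also have "\<dots> = (\<Sum>s\<in>{0..l}. f (s+j) * g s)"
  proof -
    have "(\<Sum>s'\<in>{0+j..l+j}. f s' * g (s'-j)) = (\<Sum>s\<in>{0..l}. f (s+j) * g (s+j-j))"
      by (rule sum.shift_bounds_cl_nat_ivl)
    then show ?thesis by simp
  qed
  also have "{0..l} = {..l}" by auto
  finally show ?thesis by (rule sym)
qed

lemma shift_sum_l:
  fixes f g :: "nat \<Rightarrow> 'a::ring"
  shows "(\<Sum>s\<le>l. g s * f (s+j)) = (\<Sum>s'\<le>l+j. (if j \<le> s' then g (s'-j) else 0) * f s')"
proof -
  have "(\<Sum>s'\<le>l+j. (if j \<le> s' then g (s'-j) else 0) * f s') = (\<Sum>s'\<in>{j..l+j}. g (s'-j) * f s')"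
  proof (rule sum.mono_neutral_cong_right)
    show "finite {..l+j}" by simp
    show "{j..l+j} \<subseteq> {..l+j}" by auto
    show "\<forall>i\<in>{..l+j} - {j..l+j}. (if j \<le> i then g (i-j) else 0) * f i = 0" by auto
    show "\<And>x. x \<in> {j..l+j} \<Longrightarrow> (if j \<le> x then g (x-j) else 0) * f x = g (x-j) * f x" by auto
  qed
  also have "\<dots> = (\<Sum>s\<in>{0..l}. g s * f (s+j))"
  proof -
    have "(\<Sum>s'\<in>{0+j..l+j}. g (s'-j) * f s') = (\<Sum>s\<in>{0..l}. g (s+j-j) * f (s+j))"
      by (rule sum.shift_bounds_cl_nat_ivl)
    then show ?thesis by simp
  qed
  also have "{0..l} = {..l}" by auto
  finally show ?thesis by (rule sym)
qed

lemma p_side: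
  fixes I :: "nat \<Rightarrow> nat \<Rightarrow> 'a::division_ring"
    and p q :: "nat \<Rightarrow> nat \<Rightarrow> 'a"
    and a b :: "nat \<Rightarrow> 'a" and n m :: nat
    and \<alpha> \<beta> \<pi> :: "nat \<Rightarrow> 'a"
  assumes deg_p: "\<forall>k. has_degree (p k) k"
    and deg_q: "\<forall>k. has_degree (q k) k"
    and biorth: "\<forall>k l. bipair I k (p k) l (q l) = (if k = l then 1 else 0)"
    and b_central: "\<forall>j\<le>m. central (b j)"
    and moments: "\<forall>r s. (\<Sum>i\<le>n. a i * I (r + i) s) + (\<Sum>j\<le>m. I r (s + j) * b j) = \<alpha> r * \<beta> s"
    and \<pi>_def: "\<forall>k. \<pi> k = (\<Sum>i\<le>k. p k i * \<alpha> i)"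
    and \<pi>_nz: "\<forall>k. \<pi> k \<noteq> 0"
    and k: "1 \<le> k"
  shows "\<exists>A. \<forall>t. pmult (\<lambda>i. inverse (\<pi> k) * p k i - inverse (\<pi> (k - 1)) * p (k - 1) i)
                  (\<lambda>i. if i \<le> n then a i else 0) t
          = (\<Sum>i\<in>{k - 1 - m..k + n}. A i * p i t)"
proof -
  define u where "u = (\<lambda>i. inverse (\<pi> k) * p k i - inverse (\<pi> (k - 1)) * p (k - 1) i)"
  define a' where "a' = (\<lambda>i. if i \<le> n then a i else 0)"
  have pz: "\<And>j i. j < i \<Longrightarrow> p j i = 0" using deg_p by (auto simp: has_degree_def)
  have qz: "\<And>j i. j < i \<Longrightarrow> q j i = 0" using deg_q by (auto simp: has_degree_def)
  have su: "\<forall>i>k. u i = 0" using pz k by (simp add: u_def)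
  have sa: "\<forall>i>n. a' i = 0" by (simp add: a'_def)
  define P where "P = pmult u a'"
  have Palt: "\<And>t. P t = (\<Sum>r\<le>k. \<Sum>i\<le>n. if r + i = t then u r * a' i else 0)"
    using pmult_alt[OF su sa] by (simp add: P_def)
  have sP: "\<forall>t>k+n. P t = 0"
  proof (intro allI impI)
    fix t assume "t > k + n"
    then show "P t = 0" unfolding Palt by (intro sum.neutral ballI) auto
  qed
  obtain c where c: "\<forall>t. P t = (\<Sum>i\<le>k+n. c i * p i t)" using expand_left[OF deg_p sP] by blast
  have orth: "bipair I k u i (q i) = 0" if "i + 2 \<le> k" for i
  proof -
    have "bipair I k u i (q i) = inverse (\<pi> k) * bipair I k (p k) i (q i)
        - inverse (\<pi> (k - 1)) * bipair I k (p (k - 1)) i (q i)"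
      unfolding u_def by (rule bipair_diff_left)
    also have "bipair I k (p (k - 1)) i (q i) = bipair I (k - 1) (p (k - 1)) i (q i)"
      by (rule bipair_ext_left) (use pz in auto)
    moreover have "k - 1 \<noteq> i" "k \<noteq> i" using that by auto
    ultimately show ?thesis using biorth by simp
  qed
  have piu: "(\<Sum>r\<le>k. u r * \<alpha> r) = 0"
  proof -
    have "(\<Sum>r\<le>k. u r * \<alpha> r) = inverse (\<pi> k) * (\<Sum>r\<le>k. p k r * \<alpha> r)
        - inverse (\<pi> (k - 1)) * (\<Sum>r\<le>k. p (k - 1) r * \<alpha> r)"
      by (simp add: u_def sum_distrib_left algebra_simps sum_subtractf)
    also have "(\<Sum>r\<le>k. p (k - 1) r * \<alpha> r) = (\<Sum>r\<le>k - 1. p (k - 1) r * \<alpha> r)"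
    proof -
      have "k = Suc (k - 1)" using k by simp
      then have "(\<Sum>r\<le>k. p (k - 1) r * \<alpha> r) = (\<Sum>r\<le>Suc (k - 1). p (k - 1) r * \<alpha> r)" by simp
      also have "\<dots> = (\<Sum>r\<le>k - 1. p (k - 1) r * \<alpha> r)" using pz by simp
      finally show ?thesis .
    qed
    finally show ?thesis using \<pi>_def \<pi>_nz by simp
  qed
  have mom': "\<And>r s. (\<Sum>i\<le>n. a i * I (r+i) s) = \<alpha> r * \<beta> s - (\<Sum>j\<le>m. I r (s+j) * b j)"
    using moments by (simp add: eq_diff_eq)
  have cz: "c l = 0" if l: "l + m + 2 \<le> k" for l
  proof -
    have F: "(\<Sum>r\<le>k. \<Sum>s\<le>l. u r * I r (s+j) * q l s) = 0" if j: "j \<le> m" for j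
    proof -
      define w where "w s' = (if j \<le> s' then q l (s' - j) else 0)" for s'
      have sw: "\<forall>s'>l+j. w s' = 0" using qz by (auto simp: w_def)
      obtain e where e: "\<forall>t. w t = (\<Sum>i\<le>l+j. q i t * e i)" using expand_right[OF deg_q sw] by blast
      have "(\<Sum>r\<le>k. \<Sum>s\<le>l. u r * I r (s+j) * q l s) = (\<Sum>r\<le>k. u r * (\<Sum>s\<le>l. I r (s+j) * q l s))"
        by (simp add: sum_distrib_left mult.assoc)
      also have "\<dots> = (\<Sum>r\<le>k. u r * (\<Sum>s'\<le>l+j. I r s' * w s'))"
        unfolding w_def shift_sum_r[of "I _"] ..
      also have "\<dots> = bipair I k u (l+j) w"
        by (simp add: bipair_def sum_distrib_left mult.assoc)
      also have "w = (\<lambda>t. \<Sum>i\<le>l+j. q i t * e i)" using e by auto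
      also have "bipair I k u (l+j) \<dots> = (\<Sum>i\<le>l+j. bipair I k u (l+j) (q i) * e i)"
        by (rule bipair_lin_right)
      also have "\<dots> = (\<Sum>i\<le>l+j. bipair I k u i (q i) * e i)"
      proof (intro sum.cong refl)
        fix i assume "i \<in> {..l+j}"
        then show "bipair I k u (l+j) (q i) * e i = bipair I k u i (q i) * e i"
          using qz by (subst bipair_ext_right[where d=i]) auto
      qed
      also have "\<dots> = 0" using orth l j by (intro sum.neutral ballI) auto
      finally show ?thesis .
    qed
    have "c l = bipair I (k+n) P l (q l)" using coeff_left[OF deg_p biorth c] l by simp
    also have "\<dots> = (\<Sum>t\<le>k+n. P t * (\<Sum>s\<le>l. I t s * q l s))"
      by (simp add: bipair_def sum_distrib_left mult.assoc)
    also have "\<dots> = (\<Sum>r\<le>k. \<Sum>i\<le>n. u r * a' i * (\<Sum>s\<le>l. I (r+i) s * q l s))"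
      unfolding Palt by (rule conv_sum_right) simp
    also have "\<dots> = (\<Sum>r\<le>k. \<Sum>s\<le>l. u r * (\<Sum>i\<le>n. a i * I (r+i) s) * q l s)"
    proof (rule sum.cong[OF refl])
      fix r
      have "(\<Sum>i\<le>n. u r * a' i * (\<Sum>s\<le>l. I (r+i) s * q l s)) = (\<Sum>i\<le>n. \<Sum>s\<le>l. u r * (a i * I (r+i) s) * q l s)"
        by (intro sum.cong refl) (simp add: a'_def sum_distrib_left mult.assoc)
      also have "\<dots> = (\<Sum>s\<le>l. u r * (\<Sum>i\<le>n. a i * I (r+i) s) * q l s)"
        by (subst sum.swap) (simp add: sum_distrib_left sum_distrib_right)
      finally show "(\<Sum>i\<le>n. u r * a' i * (\<Sum>s\<le>l. I (r+i) s * q l s)) = (\<Sum>s\<le>l. u r * (\<Sum>i\<le>n. a i * I (r+i) s) * q l s)" .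
    qed
    also have "\<dots> = (\<Sum>r\<le>k. \<Sum>s\<le>l. u r * \<alpha> r * (\<beta> s * q l s) - (\<Sum>j\<le>m. u r * I r (s+j) * q l s * b j))"
    proof (rule sum.cong[OF refl], rule sum.cong[OF refl])
      fix r s
      have cb: "(\<Sum>j\<le>m. u r * I r (s+j) * b j * q l s) = (\<Sum>j\<le>m. u r * I r (s+j) * q l s * b j)"
        using b_central by (intro sum.cong refl) (simp add: central_def mult.assoc)
      show "u r * (\<Sum>i\<le>n. a i * I (r+i) s) * q l s = u r * \<alpha> r * (\<beta> s * q l s) - (\<Sum>j\<le>m. u r * I r (s+j) * q l s * b j)"
      proof -
        have "u r * (\<alpha> r * \<beta> s - (\<Sum>j\<le>m. I r (s+j) * b j)) * q l s
            = u r * \<alpha> r * (\<beta> s * q l s) - u r * (\<Sum>j\<le>m. I r (s+j) * b j) * q l s"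
          by (simp add: right_diff_distrib left_diff_distrib mult.assoc)
        also have "u r * (\<Sum>j\<le>m. I r (s+j) * b j) * q l s = (\<Sum>j\<le>m. u r * I r (s+j) * b j * q l s)"
          by (simp add: sum_distrib_left sum_distrib_right mult.assoc)
        finally show ?thesis unfolding mom' cb .
      qed
    qed
    also have "\<dots> = (\<Sum>r\<le>k. u r * \<alpha> r) * (\<Sum>s\<le>l. \<beta> s * q l s) - (\<Sum>j\<le>m. (\<Sum>r\<le>k. \<Sum>s\<le>l. u r * I r (s+j) * q l s) * b j)"
    proof -
      have 1: "(\<Sum>r\<le>k. u r * \<alpha> r) * (\<Sum>s\<le>l. \<beta> s * q l s) = (\<Sum>r\<le>k. \<Sum>s\<le>l. u r * \<alpha> r * (\<beta> s * q l s))"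
        by (rule sum_product)
      have 2: "(\<Sum>j\<le>m. (\<Sum>r\<le>k. \<Sum>s\<le>l. u r * I r (s+j) * q l s) * b j)
          = (\<Sum>r\<le>k. \<Sum>s\<le>l. \<Sum>j\<le>m. u r * I r (s+j) * q l s * b j)"
        (is "?L = ?R")
      proof -
        have "?L = (\<Sum>j\<le>m. \<Sum>r\<le>k. \<Sum>s\<le>l. u r * I r (s+j) * q l s * b j)"
          by (simp only: sum_distrib_right)
        also have "\<dots> = (\<Sum>r\<le>k. \<Sum>j\<le>m. \<Sum>s\<le>l. u r * I r (s+j) * q l s * b j)"
          by (rule sum.swap)
        also have "\<dots> = ?R"
          by (rule sum.cong[OF refl], rule sum.swap)
        finally show ?thesis .
      qed
      show ?thesis unfolding 1 2 by (simp add: sum_subtractf)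
    qed
    also have "\<dots> = 0" using piu F by simp
    finally show ?thesis .
  qed
  show ?thesis
  proof (intro exI allI)
    fix t
    have "pmult u a' t = (\<Sum>i\<le>k+n. c i * p i t)" using c by (simp add: P_def)
    also have "\<dots> = (\<Sum>i\<in>{k - 1 - m..k + n}. c i * p i t)"
      by (rule sum.mono_neutral_right) (use cz in auto)
    finally show "pmult (\<lambda>i. inverse (\<pi> k) * p k i - inverse (\<pi> (k - 1)) * p (k - 1) i)
                  (\<lambda>i. if i \<le> n then a i else 0) t = (\<Sum>i\<in>{k - 1 - m..k + n}. c i * p i t)"
      by (simp add: u_def a'_def)
  qed
qed


lemma q_side:
  fixes I :: "nat \<Rightarrow> nat \<Rightarrow> 'a::division_ring"
    and p q :: "nat \<Rightarrow> nat \<Rightarrow> 'a"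
    and a b :: "nat \<Rightarrow> 'a" and n m :: nat
    and \<alpha> \<beta> \<eta> :: "nat \<Rightarrow> 'a"
  assumes deg_p: "\<forall>k. has_degree (p k) k"
    and deg_q: "\<forall>k. has_degree (q k) k"
    and biorth: "\<forall>k l. bipair I k (p k) l (q l) = (if k = l then 1 else 0)"
    and a_central: "\<forall>i\<le>n. central (a i)"
    and moments: "\<forall>r s. (\<Sum>i\<le>n. a i * I (r + i) s) + (\<Sum>j\<le>m. I r (s + j) * b j) = \<alpha> r * \<beta> s"
    and \<eta>_def: "\<forall>k. \<eta> k = (\<Sum>i\<le>k. \<beta> i * q k i)"
    and \<eta>_nz: "\<forall>k. \<eta> k \<noteq> 0"
    and k: "1 \<le> k"
  shows "\<exists>B. \<forall>t. pmult (\<lambda>j. if j \<le> m then b j else 0)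
                  (\<lambda>i. q k i * inverse (\<eta> k) - q (k - 1) i * inverse (\<eta> (k - 1))) t
          = (\<Sum>i\<in>{k - 1 - n..k + m}. q i t * B i)"
proof -
  define w where "w = (\<lambda>i. q k i * inverse (\<eta> k) - q (k - 1) i * inverse (\<eta> (k - 1)))"
  define b' where "b' = (\<lambda>j. if j \<le> m then b j else 0)"
  have pz: "\<And>j i. j < i \<Longrightarrow> p j i = 0" using deg_p by (auto simp: has_degree_def)
  have qz: "\<And>j i. j < i \<Longrightarrow> q j i = 0" using deg_q by (auto simp: has_degree_def)
  have sw: "\<forall>i>k. w i = 0" using qz k by (simp add: w_def)
  have sb: "\<forall>j>m. b' j = 0" by (simp add: b'_def)
  define Q where "Q = pmult b' w"
  have Qalt: "\<And>t. Q t = (\<Sum>j\<le>m. \<Sum>r\<le>k. if j + r = t then b' j * w r else 0)"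
    using pmult_alt[OF sb sw] by (simp add: Q_def)
  have sQ: "\<forall>t>k+m. Q t = 0"
  proof (intro allI impI)
    fix t assume "t > k + m"
    then show "Q t = 0" unfolding Qalt by (intro sum.neutral ballI) auto
  qed
  obtain c where c: "\<forall>t. Q t = (\<Sum>i\<le>k+m. q i t * c i)" using expand_right[OF deg_q sQ] by blast
  have orth: "bipair I i (p i) k w = 0" if "i + 2 \<le> k" for i
  proof -
    have "bipair I i (p i) k w = bipair I i (p i) k (q k) * inverse (\<eta> k)
        - bipair I i (p i) k (q (k - 1)) * inverse (\<eta> (k - 1))"
      unfolding w_def by (rule bipair_diff_right)
    also have "bipair I i (p i) k (q (k - 1)) = bipair I i (p i) (k - 1) (q (k - 1))"
      by (rule bipair_ext_right) (use qz in auto)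
    moreover have "k - 1 \<noteq> i" "k \<noteq> i" using that by auto
    ultimately show ?thesis using biorth by simp
  qed
  have etaw: "(\<Sum>r\<le>k. \<beta> r * w r) = 0"
  proof -
    have "(\<Sum>r\<le>k. \<beta> r * w r) = (\<Sum>r\<le>k. \<beta> r * q k r) * inverse (\<eta> k)
        - (\<Sum>r\<le>k. \<beta> r * q (k - 1) r) * inverse (\<eta> (k - 1))"
      by (simp add: w_def sum_distrib_right right_diff_distrib mult.assoc sum_subtractf)
    also have "(\<Sum>r\<le>k. \<beta> r * q (k - 1) r) = (\<Sum>r\<le>k - 1. \<beta> r * q (k - 1) r)"
    proof -
      have "k = Suc (k - 1)" using k by simp
      then have "(\<Sum>r\<le>k. \<beta> r * q (k - 1) r) = (\<Sum>r\<le>Suc (k - 1). \<beta> r * q (k - 1) r)" by simp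
      also have "\<dots> = (\<Sum>r\<le>k - 1. \<beta> r * q (k - 1) r)" using qz by simp
      finally show ?thesis .
    qed
    finally show ?thesis using \<eta>_def \<eta>_nz by simp
  qed
  have mom': "\<And>s r. (\<Sum>j\<le>m. I s (r+j) * b j) = \<alpha> s * \<beta> r - (\<Sum>i\<le>n. a i * I (s+i) r)"
  proof -
    fix s r
    have "(\<Sum>i\<le>n. a i * I (s + i) r) + (\<Sum>j\<le>m. I s (r + j) * b j) = \<alpha> s * \<beta> r"
      using moments by blast
    then show "(\<Sum>j\<le>m. I s (r+j) * b j) = \<alpha> s * \<beta> r - (\<Sum>i\<le>n. a i * I (s+i) r)"
      by (metis add_diff_cancel_left')
  qed
  have cz: "c l = 0" if l: "l + n + 2 \<le> k" for l
  proof -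
    have F: "(\<Sum>s\<le>l. \<Sum>r\<le>k. p l s * I (s+i) r * w r) = 0" if i: "i \<le> n" for i
    proof -
      define z where "z s' = (if i \<le> s' then p l (s' - i) else 0)" for s'
      have sz: "\<forall>s'>l+i. z s' = 0" using pz by (auto simp: z_def)
      obtain e where e: "\<forall>t. z t = (\<Sum>i'\<le>l+i. e i' * p i' t)" using expand_left[OF deg_p sz] by blast
      have "(\<Sum>s\<le>l. \<Sum>r\<le>k. p l s * I (s+i) r * w r) = (\<Sum>s\<le>l. p l s * (\<Sum>r\<le>k. I (s+i) r * w r))"
        by (simp add: sum_distrib_left mult.assoc)
      also have "\<dots> = (\<Sum>s'\<le>l+i. z s' * (\<Sum>r\<le>k. I s' r * w r))"
        unfolding z_def by (rule shift_sum_l)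
      also have "\<dots> = bipair I (l+i) z k w"
        by (simp add: bipair_def sum_distrib_left mult.assoc)
      also have "z = (\<lambda>t. \<Sum>i'\<le>l+i. e i' * p i' t)" using e by auto
      also have "bipair I (l+i) \<dots> k w = (\<Sum>i'\<le>l+i. e i' * bipair I (l+i) (p i') k w)"
        by (rule bipair_lin_left)
      also have "\<dots> = (\<Sum>i'\<le>l+i. e i' * bipair I i' (p i') k w)"
      proof (rule sum.cong[OF refl])
        fix i' assume "i' \<in> {..l+i}"
        then show "e i' * bipair I (l+i) (p i') k w = e i' * bipair I i' (p i') k w"
          using pz by (subst bipair_ext_left[where d=i']) auto
      qed
      also have "\<dots> = 0" using orth l i by (intro sum.neutral ballI) auto
      finally show ?thesis .
    qed
    have "c l = bipair I l (p l) (k+m) Q" using coeff_right[OF deg_q biorth c] l by simp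
    also have "\<dots> = (\<Sum>s\<le>l. p l s * (\<Sum>t\<le>k+m. I s t * Q t))"
      by (simp add: bipair_def sum_distrib_left mult.assoc)
    also have "\<dots> = (\<Sum>s\<le>l. p l s * (\<Sum>j\<le>m. \<Sum>r\<le>k. I s (j+r) * (b' j * w r)))"
      unfolding Qalt by (rule sum.cong[OF refl], rule arg_cong[where f="\<lambda>x. p l _ * x"], rule conv_sum_left) simp
    also have "\<dots> = (\<Sum>s\<le>l. \<Sum>r\<le>k. p l s * (\<Sum>j\<le>m. I s (r+j) * b j) * w r)"
    proof (rule sum.cong[OF refl])
      fix s
      have "p l s * (\<Sum>j\<le>m. \<Sum>r\<le>k. I s (j+r) * (b' j * w r)) = (\<Sum>j\<le>m. \<Sum>r\<le>k. p l s * (I s (r+j) * b j) * w r)"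
        by (simp add: sum_distrib_left b'_def mult.assoc add.commute)
      also have "\<dots> = (\<Sum>r\<le>k. \<Sum>j\<le>m. p l s * (I s (r+j) * b j) * w r)"
        by (rule sum.swap)
      also have "\<dots> = (\<Sum>r\<le>k. p l s * (\<Sum>j\<le>m. I s (r+j) * b j) * w r)"
        by (simp add: sum_distrib_left sum_distrib_right)
      finally show "p l s * (\<Sum>j\<le>m. \<Sum>r\<le>k. I s (j+r) * (b' j * w r)) = (\<Sum>r\<le>k. p l s * (\<Sum>j\<le>m. I s (r+j) * b j) * w r)" .
    qed
    also have "\<dots> = (\<Sum>s\<le>l. \<Sum>r\<le>k. p l s * \<alpha> s * (\<beta> r * w r) - (\<Sum>i\<le>n. a i * (p l s * I (s+i) r * w r)))"
    proof (rule sum.cong[OF refl], rule sum.cong[OF refl])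
      fix s r
      have ca: "(\<Sum>i\<le>n. p l s * (a i * I (s+i) r) * w r) = (\<Sum>i\<le>n. a i * (p l s * I (s+i) r * w r))"
      proof (rule sum.cong[OF refl])
        fix i assume "i \<in> {..n}"
        then have "a i * p l s = p l s * a i" using a_central by (simp add: central_def)
        then show "p l s * (a i * I (s+i) r) * w r = a i * (p l s * I (s+i) r * w r)"
          by (simp add: mult.assoc[symmetric])
      qed
      have "p l s * (\<alpha> s * \<beta> r - (\<Sum>i\<le>n. a i * I (s+i) r)) * w r
          = p l s * \<alpha> s * (\<beta> r * w r) - p l s * (\<Sum>i\<le>n. a i * I (s+i) r) * w r"
        by (simp add: right_diff_distrib left_diff_distrib mult.assoc)
      also have "p l s * (\<Sum>i\<le>n. a i * I (s+i) r) * w r = (\<Sum>i\<le>n. p l s * (a i * I (s+i) r) * w r)"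
        by (simp add: sum_distrib_left sum_distrib_right)
      finally show "p l s * (\<Sum>j\<le>m. I s (r+j) * b j) * w r = p l s * \<alpha> s * (\<beta> r * w r) - (\<Sum>i\<le>n. a i * (p l s * I (s+i) r * w r))"
        unfolding mom' ca .
    qed
    also have "\<dots> = (\<Sum>s\<le>l. p l s * \<alpha> s) * (\<Sum>r\<le>k. \<beta> r * w r) - (\<Sum>i\<le>n. a i * (\<Sum>s\<le>l. \<Sum>r\<le>k. p l s * I (s+i) r * w r))"
    proof -
      have 1: "(\<Sum>s\<le>l. p l s * \<alpha> s) * (\<Sum>r\<le>k. \<beta> r * w r) = (\<Sum>s\<le>l. \<Sum>r\<le>k. p l s * \<alpha> s * (\<beta> r * w r))"
        by (rule sum_product)
      have 2: "(\<Sum>i\<le>n. a i * (\<Sum>s\<le>l. \<Sum>r\<le>k. p l s * I (s+i) r * w r))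
          = (\<Sum>s\<le>l. \<Sum>r\<le>k. \<Sum>i\<le>n. a i * (p l s * I (s+i) r * w r))"
        (is "?L = ?R")
      proof -
        have "?L = (\<Sum>i\<le>n. \<Sum>s\<le>l. \<Sum>r\<le>k. a i * (p l s * I (s+i) r * w r))"
          by (simp only: sum_distrib_left)
        also have "\<dots> = (\<Sum>s\<le>l. \<Sum>i\<le>n. \<Sum>r\<le>k. a i * (p l s * I (s+i) r * w r))"
          by (rule sum.swap)
        also have "\<dots> = ?R"
          by (rule sum.cong[OF refl], rule sum.swap)
        finally show ?thesis .
      qed
      show ?thesis unfolding 1 2 by (simp add: sum_subtractf)
    qed
    also have "\<dots> = 0" using etaw F by simp
    finally show ?thesis .
  qed
  show ?thesis
  proof (intro exI allI)
    fix t
    have "pmult b' w t = (\<Sum>i\<le>k+m. q i t * c i)" using c by (simp add: Q_def)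
    also have "\<dots> = (\<Sum>i\<in>{k - 1 - n..k + m}. q i t * c i)"
      by (rule sum.mono_neutral_right) (use cz in auto)
    finally show "pmult (\<lambda>j. if j \<le> m then b j else 0)
                  (\<lambda>i. q k i * inverse (\<eta> k) - q (k - 1) i * inverse (\<eta> (k - 1))) t
          = (\<Sum>i\<in>{k - 1 - n..k + m}. q i t * c i)"
      by (simp add: w_def b'_def)
  qed
qed

theorem mainTheorem3:
  fixes I :: "nat \<Rightarrow> nat \<Rightarrow> 'a::division_ring"
    and p q :: "nat \<Rightarrow> nat \<Rightarrow> 'a"
    and a b :: "nat \<Rightarrow> 'a" and n m :: nat
    and \<alpha> \<beta> \<pi> \<eta> :: "nat \<Rightarrow> 'a"
  assumes deg_p: "\<forall>k. has_degree (p k) k"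
    and deg_q: "\<forall>k. has_degree (q k) k"
    and biorth: "\<forall>k l. bipair I k (p k) l (q l) = (if k = l then 1 else 0)"
    and a_central: "\<forall>i\<le>n. central (a i)"
    and b_central: "\<forall>j\<le>m. central (b j)"
    and moments: "\<forall>r s. (\<Sum>i\<le>n. a i * I (r + i) s) + (\<Sum>j\<le>m. I r (s + j) * b j) = \<alpha> r * \<beta> s"
    and \<pi>_def: "\<forall>k. \<pi> k = (\<Sum>i\<le>k. p k i * \<alpha> i)"
    and \<eta>_def: "\<forall>k. \<eta> k = (\<Sum>i\<le>k. \<beta> i * q k i)"
    and \<pi>_nz: "\<forall>k. \<pi> k \<noteq> 0"
    and \<eta>_nz: "\<forall>k. \<eta> k \<noteq> 0"
  shows "\<forall>k\<ge>1. \<exists>A B :: nat \<Rightarrow> 'a.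
     (\<forall>t. pmult (\<lambda>i. inverse (\<pi> k) * p k i - inverse (\<pi> (k - 1)) * p (k - 1) i)
                  (\<lambda>i. if i \<le> n then a i else 0) t
          = (\<Sum>i\<in>{k - 1 - m..k + n}. A i * p i t))
   \<and> (\<forall>t. pmult (\<lambda>j. if j \<le> m then b j else 0)
                  (\<lambda>i. q k i * inverse (\<eta> k) - q (k - 1) i * inverse (\<eta> (k - 1))) t
          = (\<Sum>i\<in>{k - 1 - n..k + m}. q i t * B i))"
  using p_side[OF deg_p deg_q biorth b_central moments \<pi>_def \<pi>_nz]
        q_side[OF deg_p deg_q biorth a_central moments \<eta>_def \<eta>_nz]
  by blast

end
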